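(* Let $K\ge 1$ and, for $k=1,\dots,K$, let $a_k>0$, $b_k>0$, $P_{L,k}>0$, and $\bar{\gamma}>0$. Let $Z_1,\dots,Z_K$ be independent, with $Z_k$ gamma distributed with shape $a_k$ and scale $b_k$ (the moment-matched gamma approximation described in the context), and set $\gamma_k=\frac{\bar{\gamma}}{P_{L,k}}Z_k^2$ and $\gamma^*=\max_{1\le k\le K}\gamma_k$. Then for $\gamma\ge 0$ the CDF of $\gamma^*$ is $$F_{\gamma^*}(\gamma)=\sum_{n_1=0}^{\infty}\cdots\sum_{n_K=0}^{\infty}\prod_{k=1}^{K}\frac{(-1)^{n_k}\left(\sqrt{\frac{P_{L,k}}{\bar{\gamma}b_k^2}}\right)^{a_k+n_k}}{n_k!\,(a_k+n_k)\,\Gamma(a_k)}\;\gamma^{\frac{\sum_{k=1}^{K}(a_k+n_k)}{2}},$$ and for $\gamma>0$ the PDF of $\gamma^*$ is $$f_{\gamma^*}(\gamma)=\sum_{j=1}^{K}\frac{\left(\frac{P_{L,j}}{\bar{\gamma}}\gamma\right)^{\frac{a_j-1}{2}}\exp\left(-\sqrt{\frac{P_{L,j}}{\bar{\gamma}b_j^2}\gamma}\right)}{2b_j^{a_j}\Gamma(a_j)\sqrt{\frac{\bar{\gamma}}{P_{L,j}}\gamma}}\;\sum_{(n_k)_{k\ne j}\in\mathbb{Z}_{\ge0}^{K-1}}\;\prod_{k\ne j}\frac{(-1)^{n_k}\left(\sqrt{\frac{P_{L,k}}{\bar{\gamma}b_k^2}}\right)^{a_k+n_k}}{n_k!\,(a_k+n_k)\,\Gamma(a_k)}\;\gamma^{\frac{\sum_{k\ne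 j}(a_k+n_k)}{2}}.$$
   Context: Model: there are $K$ reflecting surfaces; surface $k$ has $N_k$ elements with mutually independent amplitudes $\alpha_k^{(i)}$ (Nakagami-$m$, shape $m_{k,1}$, spread $\Omega_{k,1}$) and $\beta_k^{(i)}$ (Nakagami-$m$, shape $m_{k,2}$, spread $\Omega_{k,2}$), and $a_k=N_k\mu_k^2/\sigma_k^2$, $b_k=\sigma_k^2/\mu_k$, where $\mu_k$ and $\sigma_k^2$ are the mean and variance of $\alpha_k^{(1)}\beta_k^{(1)}$; the distribution of $\sum_{i=1}^{N_k}\alpha_k^{(i)}\beta_k^{(i)}$ is approximated by the gamma law with shape $a_k$, scale $b_k$ (density $z^{a_k-1}e^{-z/b_k}/(\Gamma(a_k)b_k^{a_k})$). $P_{L,k}$ is the path loss of path $k$, $\bar{\gamma}$ the average SNR, and $\gamma^*$ the SNR of the selected (best) surface. *)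

theory Defs
  imports "HOL-Probability.Probability"
begin

definition gamma_density :: "real \<Rightarrow> real \<Rightarrow> real \<Rightarrow> real" where
  "gamma_density a b z =
     (if 0 < z then z powr (a - 1) * exp (- z / b) / (Gamma a * b powr a) else 0)"

definition ser_coeff :: "real \<Rightarrow> real \<Rightarrow> real \<Rightarrow> real \<Rightarrow> nat \<Rightarrow> real" where
  "ser_coeff a b PL gbar n =
     (-1) ^ n * (sqrt (PL / (gbar * b\<^sup>2))) powr (a + real n)
       / (fact n * (a + real n) * Gamma a)"

end

theory Submission
  imports Defs
begin


definition pc :: "real \<Rightarrow> nat \<Rightarrow> real" where
  "pc a n = (-1)^n / (fact n * (a + real n))"

definition PP :: "real \<Rightarrow> real \<Rightarrow> real" where
  "PP a y = (\<Sum>n. pc a n * y^n)"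

definition PPd :: "real \<Rightarrow> real \<Rightarrow> real" where
  "PPd a y = (\<Sum>n. diffs (pc a) n * y^n)"

definition Phi :: "real \<Rightarrow> real \<Rightarrow> real" where
  "Phi a y = y powr a * PP a y"

lemma pc_summable_norm:
  assumes "a > 0"
  shows "summable (\<lambda>n. norm (pc a n * y^n))"
proof (rule summable_comparison_test)
  have "summable (\<lambda>n. inverse (fact n) *\<^sub>R (\<bar>y\<bar>)^n)"
    by (rule summable_exp_generic)
  then show "summable (\<lambda>n. (1/a) * (\<bar>y\<bar>^n / fact n))"
    by (intro summable_mult) (simp add: divide_inverse mult.commute)
  show "\<exists>N. \<forall>n\<ge>N. norm (norm (pc a n * y ^ n)) \<le> (1/a) * (\<bar>y\<bar>^n / fact n)"
  proof (intro exI allI impI)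
    fix n :: nat
    have "a \<le> a + real n" by simp
    have "norm (norm (pc a n * y ^ n)) = \<bar>y\<bar>^n / (fact n * (a + real n))"
      using assms by (simp add: pc_def abs_mult power_abs)
    also have "\<dots> \<le> \<bar>y\<bar>^n / (fact n * a)"
      using assms by (intro divide_left_mono mult_left_mono) auto
    also have "\<dots> = (1/a) * (\<bar>y\<bar>^n / fact n)" by simp
    finally show "norm (norm (pc a n * y ^ n)) \<le> (1/a) * (\<bar>y\<bar>^n / fact n)" .
  qed
qed

lemma pc_summable: "a > 0 \<Longrightarrow> summable (\<lambda>n. pc a n * y^n)"
  by (rule summable_norm_cancel[OF pc_summable_norm])

lemma PP_deriv: "a > 0 \<Longrightarrow> (PP a has_real_derivative PPd a y) (at y)"
  unfolding PP_def[abs_def] PPd_def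
  by (rule termdiffs_strong_converges_everywhere) (rule pc_summable)

lemma PP_cont:
  assumes "a > 0" shows "continuous_on S (PP a)"
proof (rule continuous_at_imp_continuous_on, rule ballI)
  fix y show "isCont (PP a) y" by (rule DERIV_isCont[OF PP_deriv[OF assms]])
qed

lemma PP_identity:
  assumes "a > 0"
  shows "a * PP a y + y * PPd a y = exp (- y)"
proof -
  have s1: "(\<lambda>n. a * (pc a n * y^n)) sums (a * PP a y)"
    unfolding PP_def using pc_summable[OF assms] by (intro sums_mult summable_sums)
  have sd: "summable (\<lambda>n. diffs (pc a) n * y^n)"
    using termdiff_converges_all[of "pc a"] pc_summable[OF assms] by blast
  define q where "q m = (-1)^m * y^m * real m / (fact m * (a + real m))" for m
  have "(\<lambda>n. y * (diffs (pc a) n * y^n)) sums (y * PPd a y)"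
    unfolding PPd_def using sd by (intro sums_mult summable_sums)
  moreover have "y * (diffs (pc a) n * y^n) = q (Suc n)" for n
    unfolding q_def diffs_def pc_def power_Suc[of y]
    by (simp only: times_divide_eq_left times_divide_eq_right mult_ac)
  ultimately have "(\<lambda>n. q (Suc n)) sums (y * PPd a y)" by simp
  hence s2: "q sums (y * PPd a y)"
    by (subst (asm) sums_Suc_iff) (simp add: q_def)
  have "(\<lambda>n. a * (pc a n * y^n) + q n) sums (a * PP a y + y * PPd a y)"
    by (rule sums_add[OF s1 s2])
  moreover have "a * (pc a n * y^n) + q n = (-y)^n /\<^sub>R fact n" for n
  proof -
    have hp: "a + real n > 0" using assms by simp
    define c where "c = (-1)^n * y^n / (fact n * (a + real n))"
    have e1: "a * (pc a n * y^n) = a * c" by (simp add: pc_def c_def)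
    have e2: "q n = real n * c" by (simp add: q_def c_def)
    have "a * (pc a n * y^n) + q n = (a + real n) * c"
      unfolding e1 e2 by (simp only: distrib_right)
    also have "\<dots> = (a + real n) * (((-1)^n * y^n / fact n) / (a + real n))"
      unfolding c_def by (simp only: divide_divide_eq_left)
    also have "\<dots> = (-1)^n * y^n / fact n"
      using hp by simp
    also have "\<dots> = (-y)^n /\<^sub>R fact n"
      by (simp add: power_minus[of y n] field_simps)
    finally show ?thesis .
  qed
  ultimately have "(\<lambda>n. (-y)^n /\<^sub>R fact n) sums (a * PP a y + y * PPd a y)" by simp
  moreover have "(\<lambda>n. (-y)^n /\<^sub>R fact n) sums exp (-y)"
    by (rule exp_converges)
  ultimately show ?thesis using sums_unique2 by blast
qed

lemma Phi_deriv:
  assumes "a > 0" "y > 0"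
  shows "(Phi a has_real_derivative y powr (a - 1) * exp (- y)) (at y)"
proof -
  have "((\<lambda>y. y powr a * PP a y) has_real_derivative
          y powr a * PPd a y + (a * y powr (a - 1)) * PP a y) (at y)"
    by (rule DERIV_mult'[OF has_real_derivative_powr[OF assms(2)] PP_deriv[OF assms(1)]])
  moreover have "y powr a * PPd a y + (a * y powr (a - 1)) * PP a y
        = y powr (a - 1) * (a * PP a y + y * PPd a y)"
  proof -
    have "y powr a = y powr (a - 1) * y"
      using powr_mult_base[of y "a-1"] assms by (simp add: mult.commute)
    then show ?thesis by (simp add: algebra_simps)
  qed
  ultimately show ?thesis
    unfolding Phi_def[abs_def] PP_identity[OF assms(1)] by simp
qed

lemma Phi_cont: "a > 0 \<Longrightarrow> continuous_on {0..} (Phi a)"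
  unfolding Phi_def[abs_def]
  by (intro continuous_intros continuous_on_powr' PP_cont) auto

lemma Phi_zero: "Phi a 0 = 0"
  by (simp add: Phi_def)

lemma Phi_has_sum:
  assumes "a > 0" "y \<ge> 0"
  shows "((\<lambda>n. (-1)^n * y powr (a + real n) / (fact n * (a + real n))) has_sum Phi a y) UNIV"
proof (cases "y = 0")
  case True
  have "(-1)^n * y powr (a + real n) / (fact n * (a + real n)) = 0" for n
    using True by simp
  then show ?thesis using True by (simp add: Phi_zero)
next
  case False
  hence yp: "y > 0" using assms by simp
  have eq: "(-1)^n * y powr (a + real n) / (fact n * (a + real n)) = y powr a * (pc a n * y^n)" for n
    using yp by (simp add: pc_def powr_add powr_realpow)
  show ?thesis unfolding eq
  proof (rule norm_summable_imp_has_sum)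
    show "summable (\<lambda>n. norm (y powr a * (pc a n * y ^ n)))"
    proof -
      have "summable (\<lambda>n. y powr a * norm (pc a n * y ^ n))"
        by (intro summable_mult pc_summable_norm assms(1))
      then show ?thesis by (simp add: abs_mult)
    qed
    show "(\<lambda>n. y powr a * (pc a n * y ^ n)) sums Phi a y"
      unfolding Phi_def PP_def using pc_summable[OF assms(1)]
      by (intro sums_mult summable_sums)
  qed
qed



lemma gamma_density_nonneg:
  assumes "a > 0" "b > 0" shows "gamma_density a b z \<ge> 0"
  using assms Gamma_real_pos[of a] by (simp add: gamma_density_def)

lemma gamma_cdf_has_integral:
  assumes "a > 0" "b > 0" "s \<ge> 0"
  shows "(gamma_density a b has_integral Phi a (s/b) / Gamma a) {0..s}"
proof -
  define F where "F x = Phi a (x/b) / Gamma a" for x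
  have Gp: "Gamma a > 0" using assms Gamma_real_pos by blast
  have "(gamma_density a b has_integral F s - F 0) {0..s}"
  proof (rule fundamental_theorem_of_calculus_interior_strong[where S="{}"])
    show "finite ({}::real set)" by simp
    show "0 \<le> s" by fact
    fix x assume "x \<in> {0<..<s} - {}"
    hence xp: "x > 0" by simp
    hence xbp: "x / b > 0" using assms by simp
    have d: "(Phi a has_real_derivative (x/b) powr (a-1) * exp(-(x/b))) (at (x/b))"
      by (rule Phi_deriv[OF assms(1) xbp])
    have db: "((\<lambda>x. x / b) has_real_derivative 1 / b) (at x)"
      using DERIV_cdivide[OF DERIV_ident, of b x] by simp
    have "((\<lambda>x. Phi a (x/b) / Gamma a) has_real_derivative
            ((x/b) powr (a-1) * exp(-(x/b))) * (1/b) / Gamma a) (at x)"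
      by (rule DERIV_cdivide[OF DERIV_chain2[OF d db]])
    moreover have "((x/b) powr (a-1) * exp(-(x/b))) * (1/b) / Gamma a = gamma_density a b x"
    proof -
      have bp: "b powr a = b powr (a - 1) * b"
        using powr_mult_base[of b "a-1"] assms by (simp add: mult.commute)
      have bp2: "b powr (a - 1) > 0" using assms by simp
      have "((x/b) powr (a-1) * exp(-(x/b))) * (1/b) / Gamma a
          = x powr (a-1) * exp (- x / b) / (Gamma a * (b powr (a - 1) * b))"
        using Gp bp2 assms by (simp add: powr_divide field_simps)
      then show ?thesis using xp by (simp add: gamma_density_def bp)
    qed
    ultimately show "(F has_vector_derivative gamma_density a b x) (at x)"
      by (simp add: F_def[abs_def] has_real_derivative_iff_has_vector_derivative[symmetric])
  next
    show "continuous_on {0..s} F"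
      unfolding F_def[abs_def]
    proof (intro continuous_on_divide continuous_on_const)
      show "continuous_on {0..s} (\<lambda>x. Phi a (x / b))"
        by (rule continuous_on_compose2[OF Phi_cont[OF assms(1)]])
           (use assms in \<open>auto intro!: continuous_intros\<close>)
      show "\<forall>x\<in>{0..s}. Gamma a \<noteq> 0" using Gp by simp
    qed
  qed
  then show ?thesis by (simp add: F_def Phi_zero)
qed

lemma gamma_cdf_nonneg:
  assumes "a > 0" "b > 0" "s \<ge> 0"
  shows "Phi a (s/b) / Gamma a \<ge> 0"
  using has_integral_nonneg[OF gamma_cdf_has_integral[OF assms]] gamma_density_nonneg[OF assms(1,2)]
  by blast

lemma gamma_prob:
  assumes "prob_space M" "distributed M lborel X (\<lambda>z. ennreal (gamma_density a b z))"
    "a > 0" "b > 0" "s \<ge> 0"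
  shows "measure M (X -` {-s..s} \<inter> space M) = Phi a (s/b) / Gamma a"
proof -
  interpret prob_space M by fact
  have X: "X \<in> measurable M lborel"
    and de: "distr M lborel X = density lborel (\<lambda>z. ennreal (gamma_density a b z))"
    and dm: "(\<lambda>z. ennreal (gamma_density a b z)) \<in> borel_measurable lborel"
    using assms(2) by (auto simp: distributed_def)
  have "emeasure M (X -` {-s..s} \<inter> space M) = emeasure (distr M lborel X) {-s..s}"
    by (rule emeasure_distr[OF X, symmetric]) simp
  also have "\<dots> = (\<integral>\<^sup>+z. ennreal (gamma_density a b z) * indicator {-s..s} z \<partial>lborel)"
    unfolding de by (rule emeasure_density[OF dm]) simp
  also have "\<dots> = (\<integral>\<^sup>+z. ennreal (gamma_density a b z) * indicator {0..s} z \<partial>lborel)"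
    by (rule nn_integral_cong) (auto simp: indicator_def gamma_density_def)
  also have "\<dots> = ennreal (Phi a (s/b) / Gamma a)"
    by (rule nn_integral_has_integral_lebesgue'[OF _ gamma_cdf_has_integral[OF assms(3-5)]])
       (rule gamma_density_nonneg[OF assms(3,4)])
  finally have "emeasure M (X -` {-s..s} \<inter> space M) = ennreal (Phi a (s/b) / Gamma a)" .
  then show ?thesis
    using gamma_cdf_nonneg[OF assms(3-5)] by (simp add: measure_def)
qed

lemma abs_summable_prod_PiE:
  fixes f :: "'a \<Rightarrow> 'b \<Rightarrow> real"
  assumes "finite A" "\<And>x. x \<in> A \<Longrightarrow> (\<lambda>y. norm (f x y)) summable_on B x"
  shows "(\<lambda>g. norm (\<Prod>x\<in>A. f x (g x))) summable_on PiE A B"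
  using assms
proof (induction A rule: finite_induct)
  case empty
  then show ?case by simp
next
  case (insert x F)
  have pi: "PiE (insert x F) B = (\<lambda>(g,y). g(x:=y)) ` (PiE F B \<times> B x)"
    unfolding PiE_insert_eq
    by (subst swap_product [symmetric]) (simp add: image_image case_prod_unfold)
  have inj: "inj_on (\<lambda>(g, y). g(x := y)) (PiE F B \<times> B x)"
    by (rule inj_combinator') (use insert in auto)
  define P where "P p = (\<Prod>z\<in>F. f z (p z))" for p
  have IH: "(\<lambda>p. norm (P p)) summable_on PiE F B"
    unfolding P_def using insert by auto
  have fx: "(\<lambda>y. norm (f x y)) summable_on B x" using insert by auto
  have comp: "(\<lambda>g. norm (\<Prod>z\<in>insert x F. f z (g z))) \<circ> (\<lambda>(g,y). g(x:=y))
      = (\<lambda>(p,y). norm (f x y * P p))"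
  proof (rule ext, clarify)
    fix p y
    have "(\<Prod>z\<in>F. f z ((p(x:=y)) z)) = P p"
      unfolding P_def using insert.hyps by (intro prod.cong) auto
    then show "((\<lambda>g. norm (\<Prod>z\<in>insert x F. f z (g z))) \<circ> (\<lambda>(g,y). g(x:=y))) (p, y)
        = norm (f x y * P p)"
      using insert.hyps by simp
  qed
  define S where "S = infsum (\<lambda>y. norm (f x y)) (B x)"
  have "(\<lambda>z. norm ((\<lambda>(p,y). f x y * P p) z)) summable_on (Sigma (PiE F B) (\<lambda>_. B x))"
  proof (rule Infinite_Sum.abs_summable_on_Sigma_iff[THEN iffD2], intro conjI ballI)
    fix p
    have "(\<lambda>y. norm (f x y) * norm (P p)) summable_on B x"
      by (rule summable_on_cmult_left[OF fx])
    then show "(\<lambda>y. norm ((\<lambda>(p,y). f x y * P p) (p, y))) summable_on B x"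
      by (simp add: abs_mult)
  next
    have "(\<lambda>p. S * norm (P p)) summable_on PiE F B"
      by (rule summable_on_cmult_right[OF IH])
    moreover have "norm (\<Sum>\<^sub>\<infinity>y\<in>B x. norm ((\<lambda>(p,y). f x y * P p) (p, y))) = S * norm (P p)" for p
    proof -
      have "(\<Sum>\<^sub>\<infinity>y\<in>B x. norm ((\<lambda>(p,y). f x y * P p) (p, y))) = (\<Sum>\<^sub>\<infinity>y\<in>B x. norm (f x y) * norm (P p))"
        by (simp add: abs_mult)
      also have "\<dots> = S * norm (P p)"
        unfolding S_def by (rule infsum_cmult_left') 
      finally show ?thesis
        by (simp add: S_def infsum_nonneg)
    qed
    ultimately show "(\<lambda>p. norm (\<Sum>\<^sub>\<infinity>y\<in>B x. norm ((\<lambda>(p,y). f x y * P p) (p, y)))) summable_on PiE F B"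
      by simp
  qed
  then have "(\<lambda>(p,y). norm (f x y * P p)) summable_on (PiE F B \<times> B x)"
    by (simp add: case_prod_unfold)
  then have "((\<lambda>g. norm (\<Prod>z\<in>insert x F. f z (g z))) \<circ> (\<lambda>(g,y). g(x:=y))) summable_on (PiE F B \<times> B x)"
    by (simp only: comp)
  then show ?case
    unfolding pi by (subst summable_on_reindex[OF inj])
qed

lemma has_sum_prod_PiE:
  fixes f :: "'a \<Rightarrow> 'b \<Rightarrow> real"
  assumes "finite A" "\<And>x. x \<in> A \<Longrightarrow> (\<lambda>y. norm (f x y)) summable_on B x"
    "\<And>x. x \<in> A \<Longrightarrow> (f x has_sum s x) (B x)"
  shows "((\<lambda>g. \<Prod>x\<in>A. f x (g x)) has_sum (\<Prod>x\<in>A. s x)) (PiE A B)"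
proof -
  have sm: "(\<lambda>g. \<Prod>x\<in>A. f x (g x)) summable_on PiE A B"
    by (rule Infinite_Sum.abs_summable_summable[OF abs_summable_prod_PiE[OF assms(1,2)]])
  have "infsum (\<lambda>g. \<Prod>x\<in>A. f x (g x)) (PiE A B) = (\<Prod>x\<in>A. infsum (f x) (B x))"
    by (rule infsum_prod_PiE_abs[OF assms(1,2)])
  also have "\<dots> = (\<Prod>x\<in>A. s x)"
    using assms(3) by (intro prod.cong refl) (simp add: infsumI)
  finally show ?thesis using sm by (metis summable_iff_has_sum_infsum)
qed



definition Fk :: "real \<Rightarrow> real \<Rightarrow> real \<Rightarrow> real \<Rightarrow> real \<Rightarrow> real" where
  "Fk a b PL gbar g = Phi a (sqrt (PL * g / gbar) / b) / Gamma a"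

definition dd :: "real \<Rightarrow> real \<Rightarrow> real \<Rightarrow> real \<Rightarrow> real \<Rightarrow> real" where
  "dd a b PL gbar x = (PL / gbar * x) powr ((a - 1) / 2)
               * exp (- sqrt (PL / (gbar * b\<^sup>2) * x))
               / (2 * b powr a * Gamma a * sqrt (gbar / PL * x))"

lemma Phi_terms_norm_summable:
  assumes "a > 0" "y \<ge> 0"
  shows "summable (\<lambda>n. norm ((-1)^n * y powr (a + real n) / (fact n * (a + real n))))"
proof (cases "y = 0")
  case True
  then show ?thesis by simp
next
  case False
  hence yp: "y > 0" using assms by simp
  have eq: "(-1)^n * y powr (a + real n) / (fact n * (a + real n)) = y powr a * (pc a n * y^n)" for n
    using yp by (simp add: pc_def powr_add powr_realpow)
  have "summable (\<lambda>n. y powr a * norm (pc a n * y ^ n))"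
    by (intro summable_mult pc_summable_norm assms(1))
  then show ?thesis unfolding eq by (simp add: abs_mult)
qed

lemma sqrt_split:
  assumes "b > 0" "PL > 0" "gbar > 0" "g \<ge> 0"
  shows "sqrt (PL * g / gbar) / b = sqrt (PL / (gbar * b\<^sup>2)) * sqrt g"
proof -
  have "sqrt (PL / (gbar * b\<^sup>2)) * sqrt g = sqrt (PL / (gbar * b\<^sup>2) * g)"
    by (rule real_sqrt_mult[symmetric])
  also have "PL / (gbar * b\<^sup>2) * g = (PL * g / gbar) / b\<^sup>2" by (simp add: field_simps)
  also have "sqrt \<dots> = sqrt (PL * g / gbar) / sqrt (b\<^sup>2)"
    by (rule real_sqrt_divide)
  also have "\<dots> = sqrt (PL * g / gbar) / b"
    using assms by simp
  finally show ?thesis ..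
qed

lemma ser_term:
  assumes "a > 0" "b > 0" "PL > 0" "gbar > 0" "g \<ge> 0"
  shows "ser_coeff a b PL gbar n * g powr ((a + real n) / 2)
       = (-1)^n * (sqrt (PL * g / gbar) / b) powr (a + real n) / (fact n * (a + real n)) / Gamma a"
proof -
  define c where "c = sqrt (PL / (gbar * b\<^sup>2))"
  define t where "t = a + real n"
  have "(sqrt (PL * g / gbar) / b) powr t = c powr t * g powr (t / 2)"
  proof -
    have "(sqrt (PL * g / gbar) / b) powr t = (c * sqrt g) powr t"
      unfolding c_def using sqrt_split[OF assms(2-5)] by simp
    also have "\<dots> = c powr t * sqrt g powr t" by (rule powr_mult)
    also have "sqrt g powr t = g powr (t / 2)"
      using assms(5) by (simp add: powr_half_sqrt[symmetric] powr_powr)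
    finally show ?thesis .
  qed
  then show ?thesis
    unfolding ser_coeff_def c_def[symmetric] t_def[symmetric]
    by (simp add: divide_divide_eq_left mult_ac)
qed

lemma ser_has_sum:
  assumes "a > 0" "b > 0" "PL > 0" "gbar > 0" "g \<ge> 0"
  shows "((\<lambda>n. ser_coeff a b PL gbar n * g powr ((a + real n) / 2)) has_sum Fk a b PL gbar g) UNIV"
    and "(\<lambda>n. norm (ser_coeff a b PL gbar n * g powr ((a + real n) / 2))) summable_on UNIV"
proof -
  define y where "y = sqrt (PL * g / gbar) / b"
  have y0: "y \<ge> 0" unfolding y_def using assms by simp
  have eq: "ser_coeff a b PL gbar n * g powr ((a + real n) / 2)
       = (-1)^n * y powr (a + real n) / (fact n * (a + real n)) * (1 / Gamma a)" for n
    unfolding y_def ser_term[OF assms] by simp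
  show "((\<lambda>n. ser_coeff a b PL gbar n * g powr ((a + real n) / 2)) has_sum Fk a b PL gbar g) UNIV"
    unfolding eq using has_sum_cmult_left[OF Phi_has_sum[OF assms(1) y0], of "1 / Gamma a"]
    by (simp add: Fk_def y_def)
  have "summable (\<lambda>n. norm ((-1)^n * y powr (a + real n) / (fact n * (a + real n))) * \<bar>1 / Gamma a\<bar>)"
    by (intro summable_mult2 Phi_terms_norm_summable assms(1) y0)
  then have sm: "summable (\<lambda>n. norm (norm (ser_coeff a b PL gbar n * g powr ((a + real n) / 2))))"
    unfolding eq by (simp add: abs_mult)
  show "(\<lambda>n. norm (ser_coeff a b PL gbar n * g powr ((a + real n) / 2))) summable_on UNIV"
    using norm_summable_imp_has_sum[OF sm summable_sums[OF summable_norm_cancel[OF sm]]]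
    by (rule has_sum_imp_summable)
qed

lemma prod_series:
  fixes A :: "nat set"
  assumes "finite A" "\<And>k. k \<in> A \<Longrightarrow> a k > 0" "\<And>k. k \<in> A \<Longrightarrow> b k > 0"
    "\<And>k. k \<in> A \<Longrightarrow> PL k > 0" "gbar > 0" "g \<ge> 0" "A \<noteq> {} \<or> g > 0"
  shows "((\<lambda>n. (\<Prod>k\<in>A. ser_coeff (a k) (b k) (PL k) gbar (n k))
                * g powr ((\<Sum>k\<in>A. a k + real (n k)) / 2))
         has_sum (\<Prod>k\<in>A. Fk (a k) (b k) (PL k) gbar g)) (PiE A (\<lambda>_. UNIV))"
proof -
  have hs: "((\<lambda>n. \<Prod>k\<in>A. ser_coeff (a k) (b k) (PL k) gbar (n k) * g powr ((a k + real (n k)) / 2))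
         has_sum (\<Prod>k\<in>A. Fk (a k) (b k) (PL k) gbar g)) (PiE A (\<lambda>_. UNIV))"
    by (rule has_sum_prod_PiE[OF assms(1)]) (use ser_has_sum assms in auto)
  have eq: "(\<Prod>k\<in>A. ser_coeff (a k) (b k) (PL k) gbar (n k) * g powr ((a k + real (n k)) / 2))
      = (\<Prod>k\<in>A. ser_coeff (a k) (b k) (PL k) gbar (n k)) * g powr ((\<Sum>k\<in>A. a k + real (n k)) / 2)" for n
  proof (cases "g = 0")
    case True
    then obtain k0 where k0: "k0 \<in> A" using assms(7) by auto
    have "(\<Prod>k\<in>A. ser_coeff (a k) (b k) (PL k) gbar (n k) * g powr ((a k + real (n k)) / 2)) = 0"
      using k0 assms(1) True by (intro prod_zero) auto
    then show ?thesis using True by simp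
  next
    case False
    have "(\<Prod>k\<in>A. ser_coeff (a k) (b k) (PL k) gbar (n k) * g powr ((a k + real (n k)) / 2))
        = (\<Prod>k\<in>A. ser_coeff (a k) (b k) (PL k) gbar (n k)) * (\<Prod>k\<in>A. g powr ((a k + real (n k)) / 2))"
      by (rule prod.distrib)
    also have "(\<Prod>k\<in>A. g powr ((a k + real (n k)) / 2)) = g powr (\<Sum>k\<in>A. (a k + real (n k)) / 2)"
      using False by (rule powr_sum[symmetric])
    also have "(\<Sum>k\<in>A. (a k + real (n k)) / 2) = (\<Sum>k\<in>A. a k + real (n k)) / 2"
      by (simp add: sum_divide_distrib)
    finally show ?thesis .
  qed
  show ?thesis using hs unfolding eq .
qed

lemma Fk_deriv:
  assumes "a > 0" "b > 0" "PL > 0" "gbar > 0" "x > 0"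
  shows "(Fk a b PL gbar has_real_derivative dd a b PL gbar x) (at x)"
proof -
  define r where "r = PL / gbar"
  have rp: "r > 0" unfolding r_def using assms by simp
  define u where "u g = sqrt (PL * g / gbar) / b" for g
  have rx: "r * x > 0" using rp assms by simp
  have ux: "u x = sqrt (r * x) / b" unfolding u_def r_def by simp
  have uxp: "u x > 0" unfolding ux using rx assms by simp
  have du0: "((\<lambda>g. PL * g / gbar) has_real_derivative PL * 1 / gbar) (at x)"
    by (intro DERIV_cdivide DERIV_cmult DERIV_ident)
  have "PL * x / gbar > 0" using assms by simp
  have du: "(u has_real_derivative (inverse (sqrt (PL * x / gbar)) / 2 * (PL * 1 / gbar)) / b) (at x)"
    unfolding u_def[abs_def]
    by (intro DERIV_cdivide DERIV_chain2[OF DERIV_real_sqrt du0]) fact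
  have dP: "(Phi a has_real_derivative (u x) powr (a - 1) * exp (- u x)) (at (u x))"
    by (rule Phi_deriv[OF assms(1) uxp])
  have d: "(Fk a b PL gbar has_real_derivative
      ((u x) powr (a - 1) * exp (- u x)) * ((inverse (sqrt (PL * x / gbar)) / 2 * (PL * 1 / gbar)) / b) / Gamma a) (at x)"
    unfolding Fk_def[abs_def] u_def[symmetric]
    by (intro DERIV_cdivide DERIV_chain2[OF dP du])
  have E1: "sqrt (PL / (gbar * b\<^sup>2) * x) = u x"
  proof -
    have "sqrt (PL / (gbar * b\<^sup>2) * x) = sqrt (PL / (gbar * b\<^sup>2)) * sqrt x"
      by (rule real_sqrt_mult)
    also have "\<dots> = u x"
      unfolding u_def using sqrt_split[OF assms(2-4), of x] assms(5) by simp
    finally show ?thesis .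
  qed
  have E2: "(u x) powr (a - 1) = (r * x) powr ((a - 1) / 2) / b powr (a - 1)"
  proof -
    have "(u x) powr (a - 1) = sqrt (r * x) powr (a - 1) / b powr (a - 1)"
      unfolding ux by (rule powr_divide)
    also have "sqrt (r * x) powr (a - 1) = (r * x) powr ((a - 1) / 2)"
      using rx by (simp add: powr_half_sqrt[symmetric] powr_powr)
    finally show ?thesis .
  qed
  have E3: "sqrt (gbar / PL * x) * r = sqrt (r * x)"
  proof -
    have "sqrt (gbar / PL * x) * r = sqrt (gbar / PL * x) * sqrt (r\<^sup>2)"
      using rp by simp
    also have "\<dots> = sqrt (gbar / PL * x * r\<^sup>2)" by (rule real_sqrt_mult[symmetric])
    also have "gbar / PL * x * r\<^sup>2 = r * x"
      unfolding r_def using assms by (simp add: field_simps power2_eq_square)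
    finally show ?thesis .
  qed
  have E4: "b powr a = b powr (a - 1) * b"
    using powr_mult_base[of b "a-1"] assms by (simp add: mult.commute)
  have E5: "sqrt (PL * x / gbar) = sqrt (r * x)" unfolding r_def by simp
  have Gp: "Gamma a > 0" using assms Gamma_real_pos by blast
  have bp: "b powr (a - 1) > 0" using assms by simp
  have sp: "sqrt (r * x) > 0" using rx by simp
  have sq: "sqrt (gbar / PL * x) > 0" using assms by simp
  have "((u x) powr (a - 1) * exp (- u x)) * ((inverse (sqrt (PL * x / gbar)) / 2 * (PL * 1 / gbar)) / b) / Gamma a
      = (r * x) powr ((a - 1) / 2) * exp (- u x) * r / (2 * b powr (a - 1) * b * Gamma a * sqrt (r * x))"
    unfolding E2 E5 r_def[symmetric] using Gp bp sp assms
    by (simp add: field_simps r_def)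
  also have "\<dots> = (r * x) powr ((a - 1) / 2) * exp (- u x) / (2 * b powr a * Gamma a * sqrt (gbar / PL * x))"
    unfolding E4 E3[symmetric] using Gp bp sq rp assms by (simp add: field_simps)
  also have "\<dots> = dd a b PL gbar x"
    unfolding dd_def E1 r_def by simp
  finally show ?thesis using d by simp
qed

lemma Fk_cont:
  assumes "a > 0" "b > 0" "PL > 0" "gbar > 0"
  shows "continuous_on {0..} (Fk a b PL gbar)"
  unfolding Fk_def[abs_def]
proof (intro continuous_on_divide continuous_on_const)
  show "continuous_on {0..} (\<lambda>x. Phi a (sqrt (PL * x / gbar) / b))"
    by (rule continuous_on_compose2[OF Phi_cont[OF assms(1)]])
       (use assms in \<open>auto intro!: continuous_intros\<close>)
  show "\<forall>x\<in>{0..}. Gamma a \<noteq> 0" using Gamma_real_pos[OF assms(1)] by simp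
qed

lemma Fk_zero: "Fk a b PL gbar 0 = 0"
  by (simp add: Fk_def Phi_zero)

lemma Fk_nonneg:
  assumes "a > 0" "b > 0" "PL > 0" "gbar > 0" "g \<ge> 0"
  shows "Fk a b PL gbar g \<ge> 0"
  unfolding Fk_def using gamma_cdf_nonneg[OF assms(1,2), of "sqrt (PL * g / gbar)"] assms by simp

lemma dd_nonneg:
  assumes "a > 0" "b > 0" "PL > 0" "gbar > 0" "x > 0"
  shows "dd a b PL gbar x \<ge> 0"
proof -
  have "0 < 2 * b powr a * Gamma a * sqrt (gbar / PL * x)"
    using assms Gamma_real_pos[OF assms(1)] by (intro mult_pos_pos) auto
  then show ?thesis unfolding dd_def
    by (rule divide_nonneg_pos[OF mult_nonneg_nonneg[OF powr_ge_zero less_imp_le[OF exp_gt_zero]]])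
qed

lemma Fk_meas:
  assumes "a > 0"
  shows "Fk a b PL gbar \<in> borel_measurable borel"
proof -
  have [measurable]: "PP a \<in> borel_measurable borel"
    by (rule borel_measurable_continuous_onI) (rule PP_cont[OF assms])
  show ?thesis unfolding Fk_def[abs_def] Phi_def by measurable
qed

lemma key_ineq:
  assumes "PL > 0" "gbar > 0" "g \<ge> 0"
  shows "(gbar / PL * z\<^sup>2 \<le> g) \<longleftrightarrow> z \<in> {- sqrt (PL * g / gbar) .. sqrt (PL * g / gbar)}"
proof -
  have "(gbar / PL * z\<^sup>2 \<le> g) \<longleftrightarrow> z\<^sup>2 \<le> PL * g / gbar"
    using assms by (simp add: field_simps)
  also have "\<dots> \<longleftrightarrow> sqrt (z\<^sup>2) \<le> sqrt (PL * g / gbar)"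
    by (rule real_sqrt_le_iff[symmetric])
  also have "\<dots> \<longleftrightarrow> \<bar>z\<bar> \<le> sqrt (PL * g / gbar)" by simp
  also have "\<dots> \<longleftrightarrow> z \<in> {- sqrt (PL * g / gbar) .. sqrt (PL * g / gbar)}"
    by auto
  finally show ?thesis .
qed



theorem theorem2:
  fixes M :: "'a measure" and K :: nat
    and Z :: "nat \<Rightarrow> 'a \<Rightarrow> real"
    and a b PL :: "nat \<Rightarrow> real" and gbar :: real
  assumes "prob_space M"
    and "K \<ge> 1"
    and "\<And>k. k < K \<Longrightarrow> a k > 0"
    and "\<And>k. k < K \<Longrightarrow> b k > 0"
    and "\<And>k. k < K \<Longrightarrow> PL k > 0"
    and "gbar > 0"
    and "prob_space.indep_vars M (\<lambda>_. borel) Z {..<K}"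
    and "\<And>k. k < K \<Longrightarrow>
           distributed M lborel (Z k) (\<lambda>z. ennreal (gamma_density (a k) (b k) z))"
  shows
    "(\<forall>g::real. g \<ge> 0 \<longrightarrow>
        ((\<lambda>n. (\<Prod>k<K. ser_coeff (a k) (b k) (PL k) gbar (n k))
                * g powr ((\<Sum>k<K. a k + real (n k)) / 2))
         has_sum measure M {\<omega> \<in> space M.
             Max ((\<lambda>k. gbar / PL k * (Z k \<omega>)\<^sup>2) ` {..<K}) \<le> g})
        (PiE {..<K} (\<lambda>_. UNIV)))
     \<and>
     distributed M lborel
       (\<lambda>\<omega>. Max ((\<lambda>k. gbar / PL k * (Z k \<omega>)\<^sup>2) ` {..<K}))
       (\<lambda>g. ennreal (if 0 < g then
          (\<Sum>j<K.
             (PL j / gbar * g) powr ((a j - 1) / 2)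
               * exp (- sqrt (PL j / (gbar * (b j)\<^sup>2) * g))
               / (2 * b j powr a j * Gamma (a j) * sqrt (gbar / PL j * g))
             * (\<Sum>\<^sub>\<infinity>n\<in>PiE ({..<K} - {j}) (\<lambda>_. UNIV).
                  (\<Prod>k\<in>{..<K} - {j}. ser_coeff (a k) (b k) (PL k) gbar (n k))
                  * g powr ((\<Sum>k\<in>{..<K} - {j}. a k + real (n k)) / 2)))
          else 0))"
proof -
  interpret P: prob_space M by (rule assms(1))
  have ap: "\<And>k. k < K \<Longrightarrow> a k > 0" by (rule assms(3))
  have bp: "\<And>k. k < K \<Longrightarrow> b k > 0" by (rule assms(4))
  have PLp: "\<And>k. k < K \<Longrightarrow> PL k > 0" by (rule assms(5))
  have gp: "gbar > 0" by (rule assms(6))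
  have K00: "0 \<in> {..<K}" using assms(2) by simp
  have K0: "0 \<in> {..<K}" "{..<K} \<noteq> {}" using K00 by auto
  have ind: "P.indep_sets (\<lambda>i. {Z i -` A \<inter> space M | A. A \<in> sets borel}) {..<K}"
    and Zm: "\<And>k. k < K \<Longrightarrow> Z k \<in> borel_measurable M"
    using assms(7) unfolding P.indep_vars_def2 by auto
  define s where "s k g = sqrt (PL k * g / gbar)" for k g
  define F where "F k = Fk (a k) (b k) (PL k) gbar" for k
  define G where "G g = (\<Prod>k<K. F k g)" for g
  define W where "W \<omega> = Max ((\<lambda>k. gbar / PL k * (Z k \<omega>)\<^sup>2) ` {..<K})" for \<omega>
  define H where "H x = G (max x 0)" for x

  have Fprob: "P.prob (Z k -` {-s k g..s k g} \<inter> space M) = F k g" if "k < K" "g \<ge> 0" for k g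
  proof -
    have "s k g \<ge> 0" unfolding s_def using that PLp[OF that(1)] gp by simp
    then show ?thesis
      unfolding F_def Fk_def s_def
      using gamma_prob[OF assms(1) assms(8)[OF that(1)] ap[OF that(1)] bp[OF that(1)]]
      by (simp add: s_def)
  qed

  have Wiff: "(W \<omega> \<le> g) \<longleftrightarrow> (\<forall>k\<in>{..<K}. Z k \<omega> \<in> {-s k g..s k g})" if "g \<ge> 0" for \<omega> g
  proof -
    have "(W \<omega> \<le> g) \<longleftrightarrow> (\<forall>k\<in>{..<K}. gbar / PL k * (Z k \<omega>)\<^sup>2 \<le> g)"
      unfolding W_def using K0 by (subst Max_le_iff) auto
    also have "\<dots> \<longleftrightarrow> (\<forall>k\<in>{..<K}. Z k \<omega> \<in> {-s k g..s k g})"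
      unfolding s_def using key_ineq[OF PLp gp that] by auto
    finally show ?thesis .
  qed

  have Wnn: "W \<omega> \<ge> 0" for \<omega>
  proof -
    have "0 \<le> gbar / PL 0 * (Z 0 \<omega>)\<^sup>2" using gp PLp[of 0] K0 by simp
    also have "\<dots> \<le> W \<omega>" unfolding W_def using K0 by (intro Max_ge) auto
    finally show ?thesis .
  qed

  have Wprob: "P.prob {\<omega>\<in>space M. W \<omega> \<le> g} = G g" if "g \<ge> 0" for g
  proof -
    have "{\<omega>\<in>space M. W \<omega> \<le> g} = (\<Inter>k\<in>{..<K}. Z k -` {-s k g..s k g} \<inter> space M)"
      using Wiff[OF that] K0 by auto
    also have "P.prob \<dots> = (\<Prod>k\<in>{..<K}. P.prob (Z k -` {-s k g..s k g} \<inter> space M))"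
      by (rule P.indep_setsD[OF ind subset_refl K0(2)]) auto
    also have "\<dots> = G g" unfolding G_def by (rule prod.cong[OF refl]) (simp add: Fprob that)
    finally show ?thesis .
  qed

  have G0: "G 0 = 0"
    unfolding G_def using K0 by (intro prod_zero) (auto simp: F_def Fk_zero)

  have Hprob: "P.prob {\<omega>\<in>space M. W \<omega> \<le> x} = H x" for x
  proof (cases "x \<ge> 0")
    case True then show ?thesis using Wprob by (simp add: H_def)
  next
    case False
    have "x < W \<omega>" for \<omega> using Wnn[of \<omega>] False by linarith
    then have e: "{\<omega>\<in>space M. W \<omega> \<le> x} = {}" by (auto simp: not_le)
    show ?thesis unfolding e using False G0 by (simp add: H_def max_def)
  qed

  have W_pt: "Max ((\<lambda>k. gbar / PL k * (Z k \<omega>)\<^sup>2) ` {..<K}) = W \<omega>" for \<omega>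
    by (simp add: W_def)
  have W_eq: "(\<lambda>\<omega>. Max ((\<lambda>k. gbar / PL k * (Z k \<omega>)\<^sup>2) ` {..<K})) = W"
    by (rule ext) (simp add: W_def)

  have part1: "\<forall>g::real. g \<ge> 0 \<longrightarrow>
        ((\<lambda>n. (\<Prod>k<K. ser_coeff (a k) (b k) (PL k) gbar (n k))
                * g powr ((\<Sum>k<K. a k + real (n k)) / 2))
         has_sum measure M {\<omega> \<in> space M.
             Max ((\<lambda>k. gbar / PL k * (Z k \<omega>)\<^sup>2) ` {..<K}) \<le> g})
        (PiE {..<K} (\<lambda>_. UNIV))"
  proof (intro allI impI)
    fix g :: real assume g: "g \<ge> 0"
    have "((\<lambda>n. (\<Prod>k\<in>{..<K}. ser_coeff (a k) (b k) (PL k) gbar (n k))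
                * g powr ((\<Sum>k\<in>{..<K}. a k + real (n k)) / 2))
         has_sum (\<Prod>k\<in>{..<K}. Fk (a k) (b k) (PL k) gbar g)) (PiE {..<K} (\<lambda>_. UNIV))"
      by (rule prod_series) (use ap bp PLp gp g K0 in auto)
    moreover have "measure M {\<omega> \<in> space M. Max ((\<lambda>k. gbar / PL k * (Z k \<omega>)\<^sup>2) ` {..<K}) \<le> g}
        = (\<Prod>k\<in>{..<K}. Fk (a k) (b k) (PL k) gbar g)"
      unfolding W_pt using Wprob[OF g] unfolding G_def F_def by simp
    ultimately show "((\<lambda>n. (\<Prod>k<K. ser_coeff (a k) (b k) (PL k) gbar (n k))
                * g powr ((\<Sum>k<K. a k + real (n k)) / 2))
         has_sum measure M {\<omega> \<in> space M.
             Max ((\<lambda>k. gbar / PL k * (Z k \<omega>)\<^sup>2) ` {..<K}) \<le> g})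
        (PiE {..<K} (\<lambda>_. UNIV))" by simp
  qed

  define h where "h x = (\<Sum>j<K. dd (a j) (b j) (PL j) gbar x * (\<Prod>k\<in>{..<K}-{j}. F k x))" for x
  define f where "f x = (if 0 < x then h x else 0)" for x

  have f_eq: "(if 0 < g then
          (\<Sum>j<K.
             (PL j / gbar * g) powr ((a j - 1) / 2)
               * exp (- sqrt (PL j / (gbar * (b j)\<^sup>2) * g))
               / (2 * b j powr a j * Gamma (a j) * sqrt (gbar / PL j * g))
             * (\<Sum>\<^sub>\<infinity>n\<in>PiE ({..<K} - {j}) (\<lambda>_. UNIV).
                  (\<Prod>k\<in>{..<K} - {j}. ser_coeff (a k) (b k) (PL k) gbar (n k))
                  * g powr ((\<Sum>k\<in>{..<K} - {j}. a k + real (n k)) / 2)))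
          else 0) = f g" for g
  proof (cases "0 < g")
    case True
    have "(\<Sum>\<^sub>\<infinity>n\<in>PiE ({..<K} - {j}) (\<lambda>_. UNIV).
                  (\<Prod>k\<in>{..<K} - {j}. ser_coeff (a k) (b k) (PL k) gbar (n k))
                  * g powr ((\<Sum>k\<in>{..<K} - {j}. a k + real (n k)) / 2))
        = (\<Prod>k\<in>{..<K}-{j}. F k g)" for j
      unfolding F_def
      by (rule infsumI, rule prod_series) (use ap bp PLp gp True in auto)
    then show ?thesis using True unfolding f_def h_def dd_def by simp
  next
    case False then show ?thesis by (simp add: f_def)
  qed

  have Fcont: "continuous_on {0..} (F k)" if "k < K" for k
    unfolding F_def by (rule Fk_cont[OF ap bp PLp gp, OF that that that])
  have Gcont: "continuous_on {0..} G"
    unfolding G_def[abs_def] by (intro continuous_on_prod) (use Fcont in auto)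
  have Hcont: "continuous_on UNIV H"
    unfolding H_def[abs_def]
    by (rule continuous_on_compose2[OF Gcont]) (auto intro!: continuous_intros)

  have Gder: "(G has_real_derivative h x) (at x)" if "x > 0" for x
  proof -
    have "((\<lambda>u. \<Prod>k\<in>{..<K}. F k u) has_field_derivative
        (\<Sum>k\<in>{..<K}. dd (a k) (b k) (PL k) gbar x * (\<Prod>y\<in>{..<K}-{k}. F y x))) (at x)"
      by (rule has_field_derivative_prod) (auto simp: F_def intro!: Fk_deriv ap bp PLp gp that)
    then show ?thesis unfolding G_def[abs_def] h_def by simp
  qed

  have Hder: "(H has_real_derivative f x) (at x)" if "x \<noteq> 0" for x
  proof (cases "x > 0")
    case True
    have "(H has_real_derivative h x) (at x)"
      by (rule has_field_derivative_transform_within_open[OF Gder[OF True], of "{0<..}"])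
         (use True in \<open>auto simp: H_def\<close>)
    then show ?thesis using True by (simp add: f_def)
  next
    case False
    then have xn: "x < 0" using that by simp
    have "((\<lambda>_. G 0) has_real_derivative 0) (at x)" by (rule DERIV_const)
    then have "(H has_real_derivative 0) (at x)"
      by (rule has_field_derivative_transform_within_open[of _ _ _ "{..<0}"])
         (use xn in \<open>auto simp: H_def max_def\<close>)
    then show ?thesis using xn by (simp add: f_def)
  qed

  have FTC: "(f has_integral H v - H u) {u..v}" if "u \<le> v" for u v
  proof (rule fundamental_theorem_of_calculus_interior_strong[where S="{0}"])
    show "finite {0::real}" by simp
    show "u \<le> v" by fact
    fix x assume "x \<in> {u<..<v} - {0}"
    then have "x \<noteq> 0" by simp
    then show "(H has_vector_derivative f x) (at x)"
      using Hder has_real_derivative_iff_has_vector_derivative by blast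
  next
    show "continuous_on {u..v} H" using Hcont by (rule continuous_on_subset) simp
  qed

  have fnn: "f x \<ge> 0" for x
    unfolding f_def h_def F_def
    by (auto intro!: sum_nonneg mult_nonneg_nonneg dd_nonneg prod_nonneg Fk_nonneg ap bp PLp gp)

  have hmeas: "h \<in> borel_measurable borel"
    unfolding h_def
  proof (rule borel_measurable_sum)
    fix j assume j: "j \<in> {..<K}"
    show "(\<lambda>x. dd (a j) (b j) (PL j) gbar x * (\<Prod>k\<in>{..<K}-{j}. F k x)) \<in> borel_measurable borel"
    proof (rule borel_measurable_times)
      show "dd (a j) (b j) (PL j) gbar \<in> borel_measurable borel"
        unfolding dd_def[abs_def] by measurable
      show "(\<lambda>x. \<Prod>k\<in>{..<K}-{j}. F k x) \<in> borel_measurable borel"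
        by (rule borel_measurable_prod) (auto simp: F_def intro!: Fk_meas ap)
    qed
  qed
  have fmeas[measurable]: "f \<in> borel_measurable borel"
    using hmeas unfolding f_def[abs_def] by measurable

  have Wm[measurable]: "W \<in> borel_measurable M"
    unfolding W_def
  proof (rule borel_measurable_Max)
    fix i assume "i \<in> {..<K}"
    then have [measurable]: "Z i \<in> borel_measurable M" using Zm by auto
    show "(\<lambda>x. gbar / PL i * (Z i x)\<^sup>2) \<in> borel_measurable M" by measurable
  qed simp

  have Wsets: "{\<omega>\<in>space M. W \<omega> \<le> x} \<in> sets M" for x by measurable

  have distr_eq: "distr M lborel W = density lborel (\<lambda>x. ennreal (f x))"
  proof (rule measure_eqI_generator_eq[where \<Omega>=UNIV and E="range (\<lambda>(u, v). {u<..v::real})"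
        and A="\<lambda>i. {- real i<..real i}"])
    show "Int_stable (range (\<lambda>(u, v). {u<..v::real}))"
    proof (rule Int_stableI)
      fix X Y assume "X \<in> range (\<lambda>(u, v). {u<..v::real})" "Y \<in> range (\<lambda>(u, v). {u<..v::real})"
      then obtain u v c d where XY: "X = {u<..v}" "Y = {c<..d}" by auto
      have "X \<inter> Y = {max u c<..min v d}" unfolding XY by auto
      then show "X \<inter> Y \<in> range (\<lambda>(u, v). {u<..v::real})" by auto
    qed
    show "range (\<lambda>(u, v). {u<..v::real}) \<subseteq> Pow UNIV" by simp
    show "sets (distr M lborel W) = sigma_sets UNIV (range (\<lambda>(u, v). {u<..v::real}))"
      by (simp add: borel_sigma_sets_Ioc)
    show "sets (density lborel (\<lambda>x. ennreal (f x))) = sigma_sets UNIV (range (\<lambda>(u, v). {u<..v::real}))"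
      by (simp add: borel_sigma_sets_Ioc)
    show "range (\<lambda>i. {- real i<..real i}) \<subseteq> range (\<lambda>(u, v). {u<..v::real})" by auto
    show "(\<Union>i. {- real i<..real i}) = UNIV" by (rule UN_Ioc_eq_UNIV)
    show "emeasure (distr M lborel W) {- real i<..real i} \<noteq> \<infinity>" for i
      by (simp add: emeasure_distr P.emeasure_finite)
  next
    fix X assume "X \<in> range (\<lambda>(u, v). {u<..v::real})"
    then obtain u v where X: "X = {u<..v}" by auto
    show "emeasure (distr M lborel W) X = emeasure (density lborel (\<lambda>x. ennreal (f x))) X"
    proof (cases "u < v")
      case False
      then have "X = {}" unfolding X by auto
      then show ?thesis by simp
    next
      case True
      have "emeasure (distr M lborel W) X = emeasure M (W -` X \<inter> space M)"
        by (rule emeasure_distr) (auto simp: X)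
      also have "W -` X \<inter> space M = {\<omega>\<in>space M. W \<omega> \<le> v} - {\<omega>\<in>space M. W \<omega> \<le> u}"
        unfolding X using True by auto
      also have "emeasure M \<dots> = ennreal (P.prob {\<omega>\<in>space M. W \<omega> \<le> v} - P.prob {\<omega>\<in>space M. W \<omega> \<le> u})"
        using True by (subst P.emeasure_eq_measure, subst P.finite_measure_Diff)
                     (auto intro: Wsets)
      also have "\<dots> = ennreal (H v - H u)" by (simp add: Hprob)
      finally have L: "emeasure (distr M lborel W) X = ennreal (H v - H u)" .
      have "emeasure (density lborel (\<lambda>x. ennreal (f x))) X
          = (\<integral>\<^sup>+x. ennreal (f x) * indicator {u<..v} x \<partial>lborel)"
        unfolding X by (rule emeasure_density) auto
      also have "\<dots> = (\<integral>\<^sup>+x. ennreal (f x) * indicator {u..v} x \<partial>lborel)"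
        by (rule nn_integral_cong_AE)
           (use AE_lborel_singleton[of u] in \<open>eventually_elim, auto simp: indicator_def\<close>)
      also have "\<dots> = ennreal (H v - H u)"
        by (rule nn_integral_has_integral_lebesgue'[OF fnn FTC]) (use True in simp)
      finally show ?thesis using L by simp
    qed
  qed

  have dens_eq: "(\<lambda>g. ennreal (if 0 < g then
          (\<Sum>j<K.
             (PL j / gbar * g) powr ((a j - 1) / 2)
               * exp (- sqrt (PL j / (gbar * (b j)\<^sup>2) * g))
               / (2 * b j powr a j * Gamma (a j) * sqrt (gbar / PL j * g))
             * (\<Sum>\<^sub>\<infinity>n\<in>PiE ({..<K} - {j}) (\<lambda>_. UNIV).
                  (\<Prod>k\<in>{..<K} - {j}. ser_coeff (a k) (b k) (PL k) gbar (n k))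
                  * g powr ((\<Sum>k\<in>{..<K} - {j}. a k + real (n k)) / 2)))
          else 0)) = (\<lambda>x. ennreal (f x))"
    by (rule ext) (simp only: f_eq)

  have part2: "distributed M lborel W (\<lambda>x. ennreal (f x))"
    unfolding distributed_def using distr_eq by simp

  show ?thesis
    unfolding W_eq dens_eq using part1 part2 W_eq by simp
qed

end
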